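(* Assume excitatory coupling: $\varepsilon_{ij}\ge0$ for all $i,j$ and $\varepsilon>0$, with $U(\tau)+\varepsilon<1$. Then for every ordering $\mathcal O$ the following hold. 1. For each $i$, $p_{i,0}>p_{i,1}>\dots>p_{i,k_i}=1$. 2. $A_{ij}(\mathcal O)\le 0$ for all $j\neq i$, and $A_0>1$. 3. Every eigenvalue $\lambda$ of $A(\mathcal O)$ lies in the closed disk $\{z\in\mathbb C: |z-A_0|\le A_0-1\}$. This disk lies outside the open unit disk and touches the unit circle only at $z=1$; in particular $|\lambda|\ge1$.
   Context: Let $U$ be a twice continuously differentiable, strictly increasing function on an interval $I\subseteq\mathbb R$ containing $[0,1]$. Assume $U'>0$ and $U''<0$ on $I$, $U(0)=0$ and $U(1)=1$; $U^{-1}$ denotes its inverse. Fix $N\ge 2$ and a delay $\tau\in(0,1)$. For each $i$ fix a nonempty set $\mathrm{Pre}(i)\subseteq\{1,\dots,N\}\setminus\{i\}$ and put $k_i=|\mathrm{Pre}(i)|$. Fix real couplings $\varepsilon_{ij}$ with $\varepsilon_{ij}\neq0$ if and only if $j\in\mathrm{Pre}(i)$, normalized so that $\sum_j\varepsilon_{ij}=\varepsilon$ for every $i$. An ordering $\mathcal O$ is a choice, for each $i$, of an enumeration $j_1(i),\dots,j_{k_i}(i)$ of $\mathrm{Pre}(i)$. For $n\in\{0,\dots,k_i\}$ define $$p_{i,n}=\frac{U'\Big(U^{-1}\big(U(\tau)+\sum_{m=1}^{n}\varepsilon_{ij_m(i)}\big)\Big)}{U'\big(U^{-1}(U(\tau)+\varepsilon)\big)}.$$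 The stability matrix $A(\mathcal O)$ has entries - $A_{ii}=p_{i,0}$; - $A_{ij}=p_{i,n}-p_{i,n-1}$ if $j=j_n(i)$; - $A_{ij}=0$ if $j\notin\mathrm{Pre}(i)\cup\{i\}$. Write $A_0:=p_{i,0}=U'(\tau)/U'\big(U^{-1}(U(\tau)+\varepsilon)\big)$, which does not depend on $i$. *)

theory Defs
  imports Complex_Main "Jordan_Normal_Form.Char_Poly"
begin

text \<open>Nodes are indexed by 0..<N (relabelling of 1..N). An ordering assigns to each node i a
list js = ord i enumerating Pre(i) without repetition: j_m(i) = ord i ! (m-1).\<close>

text \<open>p_{i,n} with e = eps i and js = ord i; Up is U', Uinv = inv_into I U.\<close>
definition p_seq :: "(real \<Rightarrow> real) \<Rightarrow> (real \<Rightarrow> real) \<Rightarrow> real set \<Rightarrow> real \<Rightarrow> real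
    \<Rightarrow> (nat \<Rightarrow> real) \<Rightarrow> nat list \<Rightarrow> nat \<Rightarrow> real" where
  "p_seq U Up I \<tau> \<epsilon> e js n =
     Up (inv_into I U (U \<tau> + (\<Sum>m<n. e (js ! m)))) / Up (inv_into I U (U \<tau> + \<epsilon>))"

definition stab_A0 :: "(real \<Rightarrow> real) \<Rightarrow> (real \<Rightarrow> real) \<Rightarrow> real set \<Rightarrow> real \<Rightarrow> real \<Rightarrow> real" where
  "stab_A0 U Up I \<tau> \<epsilon> = Up \<tau> / Up (inv_into I U (U \<tau> + \<epsilon>))"

definition stab_entry :: "(real \<Rightarrow> real) \<Rightarrow> (real \<Rightarrow> real) \<Rightarrow> real set \<Rightarrow> real \<Rightarrow> real
    \<Rightarrow> (nat \<Rightarrow> nat \<Rightarrow> real) \<Rightarrow> (nat \<Rightarrow> nat list) \<Rightarrow> nat \<Rightarrow> nat \<Rightarrow> real" where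
  "stab_entry U Up I \<tau> \<epsilon> eps ord i j =
     (let p = p_seq U Up I \<tau> \<epsilon> (eps i) (ord i) in
      if j = i then p 0
      else if j \<in> set (ord i) then
        (let n = (THE n. n \<in> {1..length (ord i)} \<and> ord i ! (n - 1) = j) in p n - p (n - 1))
      else 0)"

definition stab_matrix :: "nat \<Rightarrow> (real \<Rightarrow> real) \<Rightarrow> (real \<Rightarrow> real) \<Rightarrow> real set \<Rightarrow> real \<Rightarrow> real
    \<Rightarrow> (nat \<Rightarrow> nat \<Rightarrow> real) \<Rightarrow> (nat \<Rightarrow> nat list) \<Rightarrow> real mat" where
  "stab_matrix N U Up I \<tau> \<epsilon> eps ord = mat N N (\<lambda>(i, j). stab_entry U Up I \<tau> \<epsilon> eps ord i j)"

end

theory Submission imports Defs begin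

lemma incr_from_deriv:
  fixes f f' :: "real \<Rightarrow> real"
  assumes I: "connected I" and d: "\<And>x. x \<in> I \<Longrightarrow> (f has_real_derivative f' x) (at x within I)"
    and pos: "\<And>x. x \<in> I \<Longrightarrow> f' x > 0" and a: "a \<in> I" and b: "b \<in> I" and ab: "a < b"
  shows "f a < f b"
proof -
  have sub: "{a..b} \<subseteq> I" using connected_contains_Icc[OF I a b] .
  show ?thesis
  proof (rule DERIV_pos_imp_increasing_open[OF ab])
    fix x assume x: "a < x" "x < b"
    hence xI: "x \<in> I" using sub by auto
    have "(f has_real_derivative f' x) (at x within {a..b})"
      using has_field_derivative_subset[OF d[OF xI] sub] .
    hence "(f has_real_derivative f' x) (at x)" using at_within_Icc_at[OF x] by simp
    thus "\<exists>y. DERIV f x :> y \<and> y > 0" using pos[OF xI] by blast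
  next
    show "continuous_on {a..b} f"
      by (rule DERIV_continuous_on[where D=f'], rule has_field_derivative_subset[OF d sub]) (use sub in auto)
  qed
qed

lemma decr_from_deriv:
  fixes f f' :: "real \<Rightarrow> real"
  assumes I: "connected I" and d: "\<And>x. x \<in> I \<Longrightarrow> (f has_real_derivative f' x) (at x within I)"
    and neg: "\<And>x. x \<in> I \<Longrightarrow> f' x < 0" and a: "a \<in> I" and b: "b \<in> I" and ab: "a < b"
  shows "f a > f b"
proof -
  have "(\<lambda>x. - f x) a < (\<lambda>x. - f x) b"
    by (rule incr_from_deriv[OF I _ _ a b ab, where f'="\<lambda>x. - f' x"])
       (auto intro!: derivative_eq_intros d simp: neg)
  thus ?thesis by simp
qed

theorem mainTheorem4:
  fixes U Up Upp :: "real \<Rightarrow> real" and I :: "real set"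
    and N :: nat and \<tau> \<epsilon> :: real
    and Pre :: "nat \<Rightarrow> nat set" and eps :: "nat \<Rightarrow> nat \<Rightarrow> real"
    and ord :: "nat \<Rightarrow> nat list"
  assumes I_interval: "connected I" and I_01: "{0..1} \<subseteq> I"
    and U_deriv: "\<And>x. x \<in> I \<Longrightarrow> (U has_real_derivative Up x) (at x within I)"
    and Up_deriv: "\<And>x. x \<in> I \<Longrightarrow> (Up has_real_derivative Upp x) (at x within I)"
    and Upp_cont: "continuous_on I Upp"
    and Up_pos: "\<And>x. x \<in> I \<Longrightarrow> Up x > 0"
    and Upp_neg: "\<And>x. x \<in> I \<Longrightarrow> Upp x < 0"
    and U0: "U 0 = 0" and U1: "U 1 = 1"
    and N2: "N \<ge> 2"
    and tau: "0 < \<tau>" "\<tau> < 1"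
    and Pre_sub: "\<And>i. i < N \<Longrightarrow> Pre i \<subseteq> {0..<N} - {i}"
    and Pre_ne: "\<And>i. i < N \<Longrightarrow> Pre i \<noteq> {}"
    and eps_nz: "\<And>i j. i < N \<Longrightarrow> j < N \<Longrightarrow> (eps i j \<noteq> 0 \<longleftrightarrow> j \<in> Pre i)"
    and eps_sum: "\<And>i. i < N \<Longrightarrow> (\<Sum>j<N. eps i j) = \<epsilon>"
    and ord_enum: "\<And>i. i < N \<Longrightarrow> distinct (ord i) \<and> set (ord i) = Pre i"
    and excit: "\<And>i j. i < N \<Longrightarrow> j < N \<Longrightarrow> eps i j \<ge> 0"
    and eps_pos: "\<epsilon> > 0"
    and below1: "U \<tau> + \<epsilon> < 1"
  shows "(\<forall>i<N. (\<forall>n<length (ord i).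
              p_seq U Up I \<tau> \<epsilon> (eps i) (ord i) n > p_seq U Up I \<tau> \<epsilon> (eps i) (ord i) (Suc n))
            \<and> p_seq U Up I \<tau> \<epsilon> (eps i) (ord i) (length (ord i)) = 1)
    \<and> (\<forall>i<N. \<forall>j<N. j \<noteq> i \<longrightarrow> stab_entry U Up I \<tau> \<epsilon> eps ord i j \<le> 0)
    \<and> stab_A0 U Up I \<tau> \<epsilon> > 1
    \<and> (\<forall>lam. eigenvalue (map_mat complex_of_real (stab_matrix N U Up I \<tau> \<epsilon> eps ord)) lam \<longrightarrow>
           cmod (lam - complex_of_real (stab_A0 U Up I \<tau> \<epsilon>)) \<le> stab_A0 U Up I \<tau> \<epsilon> - 1)
    \<and> (\<forall>z. cmod (z - complex_of_real (stab_A0 U Up I \<tau> \<epsilon>)) \<le> stab_A0 U Up I \<tau> \<epsilon> - 1 \<longrightarrow>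
           cmod z \<ge> 1 \<and> (cmod z = 1 \<longrightarrow> z = 1))
    \<and> (\<forall>lam. eigenvalue (map_mat complex_of_real (stab_matrix N U Up I \<tau> \<epsilon> eps ord)) lam \<longrightarrow>
           cmod lam \<ge> 1)"
proof -
  define V where "V = inv_into I U"
  have I0: "0 \<in> I" and I1: "1 \<in> I" and Itau: "\<tau> \<in> I" using I_01 tau by auto
  have Umono: "U x < U y" if "x \<in> I" "y \<in> I" "x < y" for x y
    using incr_from_deriv[OF I_interval U_deriv Up_pos that] by auto
  have Upmono: "Up x > Up y" if "x \<in> I" "y \<in> I" "x < y" for x y
    using decr_from_deriv[OF I_interval Up_deriv Upp_neg that] by auto
  have injU: "inj_on U I"
  proof (rule inj_onI)
    fix x y assume "x \<in> I" "y \<in> I" "U x = U y"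
    thus "x = y" using Umono[of x y] Umono[of y x] by (cases x y rule: linorder_cases) auto
  qed
  have Ucont: "continuous_on {0..1} U"
    by (rule DERIV_continuous_on[where D=Up], rule has_field_derivative_subset[OF U_deriv I_01]) (use I_01 in auto)
  have Utau: "U \<tau> > 0" using Umono[OF I0 Itau tau(1)] U0 by simp
  have key: "V y \<in> I \<and> U (V y) = y" if yr: "U \<tau> \<le> y" "y \<le> U \<tau> + \<epsilon>" for y
  proof -
    obtain x where x: "0 \<le> x" "x \<le> 1" "U x = y"
      using IVT'[of U 0 y 1, OF _ _ _ Ucont] yr Utau below1 U0 U1 by auto
    hence "y \<in> U ` I" using I_01 by force
    thus ?thesis unfolding V_def by (simp add: inv_into_into f_inv_into_f)
  qed
  have Vmono: "V y1 < V y2" if "U \<tau> \<le> y1" "y1 < y2" "y2 \<le> U \<tau> + \<epsilon>" for y1 y2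
  proof (rule ccontr)
    assume "\<not> V y1 < V y2"
    hence "V y2 \<le> V y1" by simp
    moreover have k1: "V y1 \<in> I \<and> U (V y1) = y1" using key that by auto
    moreover have k2: "V y2 \<in> I \<and> U (V y2) = y2" using key that by auto
    ultimately have "U (V y2) \<le> U (V y1)"
    proof (cases "V y2 = V y1")
      case False
      hence "V y2 < V y1" using \<open>V y2 \<le> V y1\<close> by simp
      thus ?thesis using Umono[of "V y2" "V y1"] k1 k2 by linarith
    qed simp
    thus False using k1 k2 that by simp
  qed
  have UpV: "Up (V y1) > Up (V y2)" if "U \<tau> \<le> y1" "y1 < y2" "y2 \<le> U \<tau> + \<epsilon>" for y1 y2
    using Upmono[of "V y1" "V y2"] Vmono[OF that] key[of y1] key[of y2] that by auto
  define D where "D = Up (V (U \<tau> + \<epsilon>))"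
  have Dpos: "D > 0" unfolding D_def using key[of "U \<tau> + \<epsilon>"] Up_pos eps_pos by auto
  have Vtau: "V (U \<tau>) = \<tau>" unfolding V_def using inv_into_f_f[OF injU Itau] .
  define A0 where "A0 = stab_A0 U Up I \<tau> \<epsilon>"
  have A0_eq: "A0 = Up (V (U \<tau>)) / D" unfolding A0_def stab_A0_def D_def V_def[symmetric] Vtau by simp
  define p where "p i = p_seq U Up I \<tau> \<epsilon> (eps i) (ord i)" for i
  have row: "(\<forall>n<length (ord i). p i n > p i (Suc n)) \<and> p i (length (ord i)) = 1 \<and> p i 0 = A0
     \<and> (\<forall>j<N. j \<noteq> i \<longrightarrow> stab_entry U Up I \<tau> \<epsilon> eps ord i j \<le> 0)
     \<and> (\<Sum>j\<in>{0..<N}-{i}. \<bar>stab_entry U Up I \<tau> \<epsilon> eps ord i j\<bar>) = A0 - 1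
     \<and> A0 > 1" if iN: "i < N" for i
  proof -
    define js where "js = ord i"
    define k where "k = length js"
    define e where "e = eps i"
    define S where "S n = (\<Sum>m<n. e (js ! m))" for n
    have dist: "distinct js" and setjs: "set js = Pre i" using ord_enum[OF iN] js_def by auto
    have jsN: "js ! m < N" "js ! m \<in> Pre i" if "m < k" for m
      using Pre_sub[OF iN] setjs that k_def nth_mem by fastforce+
    have epos: "e (js ! m) > 0" if "m < k" for m
      using eps_nz[OF iN jsN(1)[OF that]] excit[OF iN jsN(1)[OF that]] jsN(2)[OF that] e_def
      by fastforce
    have bij: "bij_betw ((!) js) {..<k} (set js)" using bij_betw_nth[OF dist] k_def by simp
    have Sk: "S k = \<epsilon>"
    proof -
      have "S k = (\<Sum>j\<in>set js. e j)" unfolding S_def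
        using sum.reindex_bij_betw[OF bij, of e] by simp
      also have "\<dots> = (\<Sum>j<N. e j)"
        using Pre_sub[OF iN] eps_nz[OF iN] setjs e_def
        by (intro sum.mono_neutral_left) auto
      finally show ?thesis using eps_sum[OF iN] e_def by simp
    qed
    have Smono: "S n \<le> S m" if "n \<le> m" "m \<le> k" for n m
    proof -
      have "S m = S n + (\<Sum>l\<in>{n..<m}. e (js ! l))" unfolding S_def
        using that by (metis atLeast0LessThan sum.atLeastLessThan_concat zero_le)
      moreover have "(\<Sum>l\<in>{n..<m}. e (js ! l)) \<ge> 0" using epos that
        by (intro sum_nonneg) (smt (verit, best) atLeastLessThan_iff order.strict_trans2)
      ultimately show ?thesis by simp
    qed
    have Sstrict: "S n < S (Suc n)" if "n < k" for n
      using epos[OF that] by (simp add: S_def)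
    have S0: "S 0 = 0" by (simp add: S_def)
    have Srange: "0 \<le> S n \<and> S n \<le> \<epsilon>" if "n \<le> k" for n
      using Smono[of 0 n] Smono[of n k] that S0 Sk by auto
    have pdef: "p i n = Up (V (U \<tau> + S n)) / D" for n
      unfolding p_def p_seq_def V_def D_def S_def e_def js_def by simp
    have pdec: "p i n > p i (Suc n)" if "n < k" for n
    proof -
      have "Up (V (U \<tau> + S n)) > Up (V (U \<tau> + S (Suc n)))"
        using UpV Sstrict[OF that] Srange[of n] Srange[of "Suc n"] that by auto
      thus ?thesis unfolding pdef using Dpos by (simp add: divide_strict_right_mono)
    qed
    have pk: "p i k = 1" unfolding pdef Sk D_def using Dpos D_def by simp
    have p0: "p i 0 = A0" unfolding pdef S0 A0_eq by simp
    have kpos: "k > 0" using Pre_ne[OF iN] setjs k_def by auto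
    have pmono: "p i m \<le> p i n" if "n \<le> m" "m \<le> k" for n m
      using that
    proof (induction m)
      case 0 thus ?case by simp
    next
      case (Suc m)
      show ?case
      proof (cases "n = Suc m")
        case False
        hence "n \<le> m" using Suc by simp
        thus ?thesis using Suc pdec[of m] by force
      qed simp
    qed
    have A0gt: "A0 > 1" using pmono[of 1 k] pdec[of 0] kpos pk p0 by simp
    have THE_eq: "(THE n. n \<in> {1..length (ord i)} \<and> ord i ! (n - 1) = js ! m) = Suc m" if "m < k" for m
    proof (rule the_equality)
      fix n assume n: "n \<in> {1..length (ord i)} \<and> ord i ! (n - 1) = js ! m"
      hence "n - 1 < k" "js ! (n - 1) = js ! m" using k_def js_def by auto
      hence "n - 1 = m" using nth_eq_iff_index_eq[OF dist] that k_def by auto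
      thus "n = Suc m" using n by auto
    qed (use that k_def js_def in auto)
    have entry: "stab_entry U Up I \<tau> \<epsilon> eps ord i (js ! m) = p i (Suc m) - p i m" if "m < k" for m
    proof -
      have "js ! m \<noteq> i" using jsN(2)[OF that] Pre_sub[OF iN] by auto
      moreover have "js ! m \<in> set (ord i)" using that k_def js_def by simp
      ultimately show ?thesis unfolding stab_entry_def Let_def THE_eq[OF that] p_def by simp
    qed
    have entry0: "stab_entry U Up I \<tau> \<epsilon> eps ord i j = 0" if "j \<noteq> i" "j \<notin> set js" for j
      using that unfolding stab_entry_def js_def by simp
    have offdiag: "\<forall>j<N. j \<noteq> i \<longrightarrow> stab_entry U Up I \<tau> \<epsilon> eps ord i j \<le> 0"
    proof (intro allI impI)
      fix j assume "j < N" "j \<noteq> i"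
      show "stab_entry U Up I \<tau> \<epsilon> eps ord i j \<le> 0"
      proof (cases "j \<in> set js")
        case True
        then obtain m where "m < k" "j = js ! m" by (metis in_set_conv_nth k_def)
        thus ?thesis using entry pdec by force
      qed (use entry0 \<open>j \<noteq> i\<close> in simp)
    qed
    have "(\<Sum>j\<in>{0..<N}-{i}. \<bar>stab_entry U Up I \<tau> \<epsilon> eps ord i j\<bar>)
        = (\<Sum>j\<in>set js. \<bar>stab_entry U Up I \<tau> \<epsilon> eps ord i j\<bar>)"
      using Pre_sub[OF iN] setjs entry0 by (intro sum.mono_neutral_right) auto
    also have "\<dots> = (\<Sum>m<k. \<bar>stab_entry U Up I \<tau> \<epsilon> eps ord i (js ! m)\<bar>)"
      using sum.reindex_bij_betw[OF bij, of "\<lambda>j. \<bar>stab_entry U Up I \<tau> \<epsilon> eps ord i j\<bar>"] by simp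
    also have "\<dots> = (\<Sum>m<k. p i m - p i (Suc m))"
      using entry pdec by (intro sum.cong) (auto simp: abs_if)
    also have "\<dots> = A0 - 1" using sum_lessThan_telescope'[of "p i" k] pk p0 by simp
    finally have rs: "(\<Sum>j\<in>{0..<N}-{i}. \<bar>stab_entry U Up I \<tau> \<epsilon> eps ord i j\<bar>) = A0 - 1" .
    show ?thesis using pdec pk p0 offdiag rs A0gt k_def js_def by auto
  qed
  have A0gt: "A0 > 1" using row[of 0] N2 by auto
  have disk: "cmod z \<ge> 1 \<and> (cmod z = 1 \<longrightarrow> z = 1)" if zd: "cmod (z - complex_of_real A0) \<le> A0 - 1" for z
  proof -
    have cA: "cmod (complex_of_real A0) = A0" using A0gt by simp
    have t: "cmod (complex_of_real A0) \<le> cmod z + cmod (complex_of_real A0 - z)"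
      by (rule norm_triangle_sub)
    have "cmod (complex_of_real A0 - z) = cmod (z - complex_of_real A0)" by (rule norm_minus_commute)
    hence ge: "cmod z \<ge> 1" using t cA zd by linarith
    have "z = 1" if z1: "cmod z = 1"
    proof -
      define w where "w = z - complex_of_real A0"
      have "(cmod w)^2 \<le> (A0 - 1)^2" using zd w_def by (intro power_mono) auto
      moreover have "(cmod w)^2 = (Re z - A0)^2 + (Im z)^2" unfolding cmod_power2 w_def by simp
      ultimately have i1: "(Re z - A0)^2 + (Im z)^2 \<le> (A0 - 1)^2" by simp
      have i2: "(Re z)^2 + (Im z)^2 = 1" using z1 cmod_power2[of z] by simp
      have "(Re z - A0)^2 = (Re z)^2 - 2 * A0 * Re z + A0^2" "(A0 - 1)^2 = A0^2 - 2 * A0 + 1"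
        by (simp_all add: power2_eq_square algebra_simps)
      hence "A0 * 1 \<le> A0 * Re z" using i1 i2 by linarith
      hence r1: "Re z \<ge> 1" using A0gt by simp
      have "\<bar>Re z\<bar> \<le> 1" using z1 abs_Re_le_cmod by metis
      hence "Re z = 1" using r1 by simp
      hence "Im z = 0" using i2 by simp
      thus "z = 1" using \<open>Re z = 1\<close> by (simp add: complex_eq_iff)
    qed
    thus ?thesis using ge by blast
  qed
  define M where "M = map_mat complex_of_real (stab_matrix N U Up I \<tau> \<epsilon> eps ord)"
  have Mij: "M $$ (i, j) = complex_of_real (stab_entry U Up I \<tau> \<epsilon> eps ord i j)" if "i < N" "j < N" for i j
    using that unfolding M_def stab_matrix_def by simp
  have dimM: "dim_row M = N" "dim_col M = N" unfolding M_def stab_matrix_def by auto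
  have gersh: "cmod (lam - complex_of_real A0) \<le> A0 - 1" if ev: "eigenvalue M lam" for lam
  proof -
    obtain v where v: "v \<in> carrier_vec N" "v \<noteq> 0\<^sub>v N" "M *\<^sub>v v = lam \<cdot>\<^sub>v v"
      using ev unfolding eigenvalue_def eigenvector_def dimM by auto
    have Npos: "N > 0" using N2 by simp
    define mx where "mx = Max ((\<lambda>j. cmod (v $ j)) ` {0..<N})"
    have "mx \<in> (\<lambda>j. cmod (v $ j)) ` {0..<N}" unfolding mx_def using Npos by (intro Max_in) auto
    then obtain i where iN: "i < N" and vi: "cmod (v $ i) = mx" by auto
    have vmax: "cmod (v $ j) \<le> cmod (v $ i)" if "j < N" for j
      unfolding vi mx_def using that by (intro Max_ge) auto
    have "\<exists>j<N. v $ j \<noteq> 0"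
    proof (rule ccontr)
      assume "\<not> ?thesis"
      hence "v = 0\<^sub>v N" using v(1) by (intro eq_vecI) auto
      thus False using v(2) by simp
    qed
    then obtain j where "j < N" "v $ j \<noteq> 0" by auto
    hence vipos: "cmod (v $ i) > 0" using vmax[of j] by (smt (verit) norm_le_zero_iff)
    let ?a = "\<lambda>j. stab_entry U Up I \<tau> \<epsilon> eps ord i j"
    have rowi: "(\<forall>n<length (ord i). p i n > p i (Suc n)) \<and> p i (length (ord i)) = 1 \<and> p i 0 = A0
     \<and> (\<forall>j<N. j \<noteq> i \<longrightarrow> ?a j \<le> 0)
     \<and> (\<Sum>j\<in>{0..<N}-{i}. \<bar>?a j\<bar>) = A0 - 1" using row[OF iN] by blast
    have aii: "?a i = A0" using rowi unfolding stab_entry_def p_def by simp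
    have "lam * v $ i = (M *\<^sub>v v) $ i" using v(3) iN v(1) by simp
    also have "\<dots> = (\<Sum>j\<in>{0..<N}. complex_of_real (?a j) * v $ j)"
      using iN v(1) dimM by (simp add: scalar_prod_def Mij)
    also have "\<dots> = complex_of_real (?a i) * v $ i + (\<Sum>j\<in>{0..<N}-{i}. complex_of_real (?a j) * v $ j)"
      using iN by (subst sum.remove[of _ i]) auto
    finally have "(lam - complex_of_real A0) * v $ i = (\<Sum>j\<in>{0..<N}-{i}. complex_of_real (?a j) * v $ j)"
      using aii by (simp add: algebra_simps)
    hence "cmod (lam - complex_of_real A0) * cmod (v $ i) = cmod (\<Sum>j\<in>{0..<N}-{i}. complex_of_real (?a j) * v $ j)"
      by (metis norm_mult)
    also have "\<dots> \<le> (\<Sum>j\<in>{0..<N}-{i}. cmod (complex_of_real (?a j) * v $ j))" by (rule norm_sum)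
    also have "\<dots> \<le> (\<Sum>j\<in>{0..<N}-{i}. \<bar>?a j\<bar> * cmod (v $ i))"
      using vmax by (intro sum_mono) (auto simp: norm_mult intro: mult_left_mono)
    also have "\<dots> = (\<Sum>j\<in>{0..<N}-{i}. \<bar>?a j\<bar>) * cmod (v $ i)" by (rule sum_distrib_right[symmetric])
    also have "\<dots> = (A0 - 1) * cmod (v $ i)" using rowi by presburger
    finally show ?thesis using vipos by simp
  qed
  have eig_ge: "cmod lam \<ge> 1" if "eigenvalue M lam" for lam
    using disk gersh that by blast
  show ?thesis
    using row gersh disk eig_ge A0gt unfolding p_def M_def A0_def by auto
qed

end
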